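(* Let $T\ge1$ and $0<\eta\le\frac{1}{5\sqrt T}$, suppose $d:=\max\{25\eta^2T^2,1\}$ is a positive integer, let $f(w)=\max\{0,\max_{i\in[d]}(\frac{1}{\sqrt d}-w[i]-\frac{\eta i}{4d})\}$, let $\delta=\frac{\eta}{16d}$, and let $\tilde f(w)=\mathbb E_{v}[f(w+\delta v)]$ with $v$ uniform on the closed unit ball of $\mathbb R^d$. Let $(w_t)$ and $(\tilde w_t)$ be the iterates of unprojected GD with step size $\eta$ started at $w_1=\tilde w_1=0$ on $f$ and on $\tilde f$ respectively. Then $w_t=\tilde w_t$ for all $t\in[T]$.
   Context: $w[i]$ denotes the $i$-th coordinate of $w$. *)

theory Defs
  imports "HOL-Analysis.Analysis"
begin

definition subgrad :: "('a::real_inner \<Rightarrow> real) \<Rightarrow> 'a \<Rightarrow> 'a set" where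
  "subgrad F w = {g. \<forall>y. F w + inner g (y - w) \<le> F y}"

text \<open>The hard function f(w) = max{0, max_{i in [d]} (1/sqrt d - w[i] - eta i/(4d))};
  the coordinates of R^d are labelled 1..d via the bijection e.\<close>
definition hardf :: "real \<Rightarrow> nat \<Rightarrow> (nat \<Rightarrow> 'n::finite) \<Rightarrow> real^'n \<Rightarrow> real" where
  "hardf \<eta> d e w = max 0 (Max ((\<lambda>i. 1 / sqrt (real d) - w $ (e i) - \<eta> * real i / (4 * real d)) ` {1..d}))"

definition smoothed :: "real \<Rightarrow> (real^'n::finite \<Rightarrow> real) \<Rightarrow> real^'n \<Rightarrow> real" where
  "smoothed \<delta> F w = integral\<^sup>L (uniform_measure lborel (cball 0 1)) (\<lambda>v. F (w + \<delta> *\<^sub>R v))"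

end

theory Submission imports Defs "HOL-Probability.Probability_Measure" begin

lemma hardf_meas: "hardf \<eta> d e \<in> borel_measurable borel"
  unfolding hardf_def by measurable

abbreviation "UB \<equiv> uniform_measure lborel (cball (0::real^'n::finite) 1)"

lemma cball_pos: "emeasure lborel (cball (0::real^'n::finite) 1) \<noteq> 0"
proof -
  have "emeasure lborel (cball (0::real^'n::finite) 1) = ennreal (measure lborel (cball (0::real^'n) 1))"
    using emeasure_lborel_cball_finite[of "0::real^'n" 1] by (intro emeasure_eq_ennreal_measure) auto
  moreover have "measure lborel (cball (0::real^'n) 1) > 0" using content_cball_pos[of 1 "0::real^'n"] by simp
  ultimately show ?thesis by simp
qed

lemma UB_prob: "prob_space (UB::(real^'n::finite) measure)"
  by (rule prob_space_uniform_measure) (use cball_pos emeasure_lborel_cball_finite[of "0::real^'n" 1] in \<open>auto simp: less_top\<close>)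

lemma UB_AE: "AE v in (UB::(real^'n::finite) measure). v \<in> cball 0 1"
  by (rule AE_uniform_measureI) auto

lemma UB_int: "integrable (UB::(real^'n::finite) measure) (\<lambda>v. v $ j)"
proof -
  interpret prob_space "UB::(real^'n::finite) measure" by (rule UB_prob)
  show ?thesis
  proof (rule integrable_const_bound[where B=1])
    show "AE v in UB. norm (v $ j) \<le> 1"
      using UB_AE by eventually_elim (auto intro: order.trans[OF component_le_norm_cart])
  qed simp
qed

lemma smoothed_local:
  fixes F :: "real^'n::finite \<Rightarrow> real"
  assumes meas: "F \<in> borel_measurable borel"
  and eq: "\<And>v. v \<in> cball 0 1 \<Longrightarrow> F (y + \<delta> *\<^sub>R v) = a - \<delta> * v $ j"
  shows "smoothed \<delta> F y = a - \<delta> * integral\<^sup>L (UB::(real^'n::finite) measure) (\<lambda>v. v $ j)"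
proof -
  interpret prob_space "UB::(real^'n::finite) measure" by (rule UB_prob)
  have "smoothed \<delta> F y = integral\<^sup>L UB (\<lambda>v. a - \<delta> * v $ j)"
    unfolding smoothed_def
  proof (rule integral_cong_AE)
    show "(\<lambda>v. F (y + \<delta> *\<^sub>R v)) \<in> borel_measurable UB"
      using meas by measurable
    show "(\<lambda>v. a - \<delta> * v $ j) \<in> borel_measurable UB" by measurable
    show "AE v in UB. F (y + \<delta> *\<^sub>R v) = a - \<delta> * v $ j"
      using UB_AE by eventually_elim (use eq in auto)
  qed
  also have "\<dots> = a - \<delta> * integral\<^sup>L UB (\<lambda>v. v $ j)"
    using UB_int[of j] prob_space by simp
  finally show ?thesis .
qed
lemma subgrad_unique:
  fixes F :: "real^'n::finite \<Rightarrow> real"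
  assumes r: "r > 0" and loc: "\<And>y. norm (y - x) < r \<Longrightarrow> F y = c - y $ j"
  and g: "g \<in> subgrad F x"
  shows "g = - axis j 1"
proof (rule ccontr)
  assume ne: "g \<noteq> - axis j 1"
  define u where "u = g + axis j 1"
  have u0: "u \<noteq> 0" using ne unfolding u_def by (metis add.commute add_eq_0_iff)
  hence nu: "norm u > 0" by simp
  define s where "s = r / (2 * norm u)"
  have s0: "s > 0" using r nu unfolding s_def by simp
  have "norm ((x + s *\<^sub>R u) - x) = r / 2" using nu r unfolding s_def by simp
  hence Fy: "F (x + s *\<^sub>R u) = c - (x + s *\<^sub>R u) $ j" using r by (intro loc) simp
  have Fx: "F x = c - x $ j" using r by (intro loc) simp
  from g have "F x + inner g ((x + s *\<^sub>R u) - x) \<le> F (x + s *\<^sub>R u)"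
    unfolding subgrad_def by blast
  hence "s * inner g u \<le> - s * u $ j" using Fy Fx by (simp add: inner_commute)
  moreover have "inner u u = inner g u + u $ j" unfolding u_def
    by (simp add: inner_add_left inner_axis' )
  ultimately have "s * inner u u \<le> 0" by (simp add: algebra_simps)
  hence "inner u u \<le> 0" using s0 by (simp add: mult_le_0_iff)
  thus False using u0 inner_gt_zero_iff[of u] by linarith
qed

definition pp :: "real \<Rightarrow> nat \<Rightarrow> (nat \<Rightarrow> 'n::finite) \<Rightarrow> real^'n \<Rightarrow> nat \<Rightarrow> real" where
  "pp \<eta> d e x i = 1 / sqrt (real d) - x $ (e i) - \<eta> * real i / (4 * real d)"

lemma hardf_local:
  fixes x y :: "real^'n::finite"
  assumes d: "d \<ge> 1" and eta: "\<eta> > 0" and k: "k \<in> {1..d}"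
  and margin: "\<And>i. i \<in> {1..d} \<Longrightarrow> i \<noteq> k \<Longrightarrow> pp \<eta> d e x i + \<eta> / (4 * real d) \<le> pp \<eta> d e x k"
  and pos: "\<eta> / (8 * real d) \<le> pp \<eta> d e x k"
  and near: "norm (y - x) < \<eta> / (8 * real d)"
  shows "hardf \<eta> d e y = (1 / sqrt (real d) - \<eta> * real k / (4 * real d)) - y $ (e k)"
proof -
  have comp: "\<bar>y $ j - x $ j\<bar> < \<eta> / (8 * real d)" for j
    using component_le_norm_cart[of "y - x" j] near by simp
  have le: "pp \<eta> d e y i \<le> pp \<eta> d e y k" if i: "i \<in> {1..d}" for i
  proof (cases "i = k")
    case False
    have "pp \<eta> d e x i + \<eta> / (4 * real d) \<le> pp \<eta> d e x k" using margin i False by blast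
    moreover have "\<eta> / (4 * real d) = 2 * (\<eta> / (8 * real d))" by simp
    ultimately show ?thesis using comp[of "e i"] comp[of "e k"] unfolding pp_def by linarith
  qed simp
  have posy: "0 < pp \<eta> d e y k" using pos comp[of "e k"] unfolding pp_def by linarith
  have "Max ((\<lambda>i. pp \<eta> d e y i) ` {1..d}) = pp \<eta> d e y k"
    by (rule Max_eqI) (use le k in auto)
  hence "hardf \<eta> d e y = max 0 (pp \<eta> d e y k)"
    unfolding hardf_def pp_def by simp
  also have "\<dots> = pp \<eta> d e y k" using posy by simp
  finally show ?thesis unfolding pp_def by simp
qed

lemma numeric:
  fixes T d m k :: nat and \<eta> :: real
  assumes "T \<ge> 1" and eta: "0 < \<eta>" and eT: "\<eta> \<le> 1 / (5 * sqrt (real T))"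
    and dd: "real d = max (25 * \<eta>^2 * (real T)^2) 1"
    and md: "real m * real d \<le> real T" and k: "1 \<le> k" "k \<le> d"
  shows "\<eta> / (8 * real d) \<le> 1 / sqrt (real d) - \<eta> * real m - \<eta> * real k / (4 * real d)"
proof -
  define r where "r = sqrt (real d)"
  have T1: "real T \<ge> 1" using assms(1) by simp
  have d1: "real d \<ge> 1" using dd by simp
  have r1: "r \<ge> 1" unfolding r_def using d1 by simp
  have rr: "r * r = real d" unfolding r_def using d1 by simp
  have sT: "sqrt (real T) > 0" using T1 by simp
  have e2: "\<eta>^2 \<le> 1 / (25 * real T)"
  proof -
    have "\<eta>^2 \<le> (1 / (5 * sqrt (real T)))^2" using eT eta by (intro power_mono) auto
    also have "\<dots> = 1 / (25 * real T)" using T1 by (simp add: power_divide power_mult_distrib)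
    finally show ?thesis .
  qed
  have "25 * \<eta>^2 * (real T)^2 \<le> real T"
  proof -
    have "25 * \<eta>^2 * (real T)^2 \<le> 25 * (1 / (25 * real T)) * (real T)^2"
      using e2 by (intro mult_right_mono) auto
    also have "\<dots> = real T" using T1 by (simp add: power2_eq_square)
    finally show ?thesis .
  qed
  hence dT: "real d \<le> real T" using dd T1 by simp
  have rT: "r \<le> sqrt (real T)" unfolding r_def using dT by simp
  have er: "\<eta> * r \<le> 1/5"
  proof -
    have "\<eta> * r \<le> \<eta> * sqrt (real T)" using rT eta by simp
    also have "\<dots> \<le> 1/5" using eT sT by (simp add: field_simps)
    finally show ?thesis .
  qed
  have eTr: "5 * \<eta> * real T \<le> r"
  proof -
    have "(5 * \<eta> * real T)^2 \<le> real d" using dd by (simp add: power_mult_distrib)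
    hence "sqrt ((5 * \<eta> * real T)^2) \<le> r" unfolding r_def by (rule real_sqrt_le_mono)
    thus ?thesis using eta T1 by simp
  qed
  have t1: "\<eta> * real m \<le> 1 / (5 * r)"
  proof -
    have "real m \<le> real T / (r * r)" using md rr d1 by (simp add: field_simps)
    hence "\<eta> * real m \<le> \<eta> * (real T / (r * r))" using eta by (intro mult_left_mono) auto
    also have "\<dots> = (\<eta> * real T) / (r * r)" by simp
    also have "\<dots> \<le> (r / 5) / (r * r)" using eTr r1 by (intro divide_right_mono) auto
    also have "\<dots> = 1 / (5 * r)" using r1 by (simp add: field_simps)
    finally show ?thesis .
  qed
  have t2: "\<eta> * real k / (4 * real d) \<le> 1 / (20 * r)"
  proof -
    have "\<eta> * real k / (4 * real d) \<le> \<eta> * real d / (4 * real d)"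
      using k eta by (intro divide_right_mono mult_left_mono) auto
    also have "\<dots> = \<eta> / 4" using d1 by simp
    also have "\<dots> \<le> 1 / (20 * r)" using er r1 by (simp add: field_simps)
    finally show ?thesis .
  qed
  have t3: "\<eta> / (8 * real d) \<le> 1 / (40 * r)"
  proof -
    have "\<eta> / (8 * real d) \<le> \<eta> / 8" using d1 eta by (simp add: field_simps)
    also have "\<dots> \<le> 1 / (40 * r)" using er r1 by (simp add: field_simps)
    finally show ?thesis .
  qed
  have "1 / (5 * r) + 1 / (20 * r) + 1 / (40 * r) \<le> 1 / r" using r1 by (simp add: field_simps)
  thus ?thesis using t1 t2 t3 unfolding r_def by linarith
qed

definition cnt :: "nat \<Rightarrow> nat \<Rightarrow> nat \<Rightarrow> nat" where
  "cnt d s i = s div d + (if i \<le> s mod d then 1 else 0)"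

lemma cnt_Suc:
  assumes "d \<ge> 1" "i \<in> {1..d}"
  shows "cnt d (Suc s) i = cnt d s i + (if i = s mod d + 1 then 1 else 0)"
proof -
  have lt: "s mod d < d" using assms(1) by simp
  show ?thesis
  proof (cases "Suc (s mod d) = d")
    case True
    then show ?thesis using assms unfolding cnt_def by (auto simp: mod_Suc div_Suc)
  next
    case False
    then show ?thesis using assms lt unfolding cnt_def by (auto simp: mod_Suc div_Suc)
  qed
qed

lemma margin_lemma:
  fixes x :: "real^'n::finite"
  assumes d: "d \<ge> 1" and eta: "\<eta> > 0"
  and P: "\<forall>i\<in>{1..d}. x $ e i = \<eta> * real (cnt d s i)"
  and i: "i \<in> {1..d}" and ik: "i \<noteq> s mod d + 1"
  shows "pp \<eta> d e x i + \<eta> / (4 * real d) \<le> pp \<eta> d e x (s mod d + 1)"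
proof -
  define k where "k = s mod d + 1"
  have kd: "k \<in> {1..d}" unfolding k_def using d by (simp add: Suc_le_eq)
  define q where "q = \<eta> / (4 * real d)"
  have q0: "q > 0" unfolding q_def using eta d by simp
  have qd: "q * real d = \<eta> / 4" unfolding q_def using d by simp
  have ck: "cnt d s k = s div d" unfolding cnt_def k_def by simp
  have xk: "x $ e k = \<eta> * real (s div d)" using P kd ck by simp
  have ppq: "pp \<eta> d e x j = 1 / sqrt (real d) - x $ e j - q * real j" for j
    unfolding pp_def q_def by simp
  show ?thesis
  proof (cases "i \<le> s mod d")
    case True
    have xi: "x $ e i = \<eta> * real (s div d) + \<eta>" using P i True unfolding cnt_def by (simp add: algebra_simps)
    have "real k - real i + 1 \<le> real d" using kd i True k_def by simp
    hence "q * (real k - real i + 1) \<le> q * real d" using q0 by (intro mult_left_mono) auto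
    hence "q * (real k - real i + 1) \<le> \<eta>" using qd eta by simp
    thus ?thesis using xi xk ppq[of i] ppq[of k] q_def[symmetric] unfolding k_def
      by (simp add: algebra_simps)
  next
    case False
    have xi: "x $ e i = \<eta> * real (s div d)" using P i False unfolding cnt_def by simp
    have "real i \<ge> real k + 1" using False ik k_def by simp
    hence "q * (real k + 1) \<le> q * real i" using q0 by (intro mult_left_mono) auto
    thus ?thesis using xi xk ppq[of i] ppq[of k] q_def[symmetric] unfolding k_def
      by (simp add: algebra_simps)
  qed
qed

lemma next_P:
  fixes x :: "real^'n::finite"
  assumes d: "d \<ge> 1" and inj: "inj_on e {1..d}"
  and P: "\<forall>i\<in>{1..d}. x $ e i = \<eta> * real (cnt d s i)"
  shows "\<forall>i\<in>{1..d}. (x - \<eta> *\<^sub>R (- axis (e (s mod d + 1)) 1)) $ e i = \<eta> * real (cnt d (Suc s) i)"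
proof
  fix i assume i: "i \<in> {1..d}"
  have kd: "s mod d + 1 \<in> {1..d}" using d by (simp add: Suc_le_eq)
  have "(e i = e (s mod d + 1)) = (i = s mod d + 1)" using inj i kd by (auto dest: inj_onD)
  thus "(x - \<eta> *\<^sub>R (- axis (e (s mod d + 1)) 1)) $ e i = \<eta> * real (cnt d (Suc s) i)"
    using P i cnt_Suc[OF d i, of s] by (auto simp: axis_def algebra_simps)
qed

theorem mainTheorem14:
  fixes T d :: nat and \<eta> :: real and e :: "nat \<Rightarrow> 'n::finite"
    and w wt :: "nat \<Rightarrow> real^'n" and g gt :: "nat \<Rightarrow> real^'n"
  assumes "T \<ge> 1"
    and "0 < \<eta>" and "\<eta> \<le> 1 / (5 * sqrt (real T))"
    and "real d = max (25 * \<eta>^2 * (real T)^2) 1"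
    and "CARD('n) = d"
    and "bij_betw e {1..d} (UNIV :: 'n set)"
    and "w 1 = 0" and "wt 1 = 0"
    and "\<And>t. 1 \<le> t \<Longrightarrow> t < T \<Longrightarrow>
           g t \<in> subgrad (hardf \<eta> d e) (w t) \<and> w (Suc t) = w t - \<eta> *\<^sub>R g t"
    and "\<And>t. 1 \<le> t \<Longrightarrow> t < T \<Longrightarrow>
           gt t \<in> subgrad (smoothed (\<eta> / (16 * real d)) (hardf \<eta> d e)) (wt t)
           \<and> wt (Suc t) = wt t - \<eta> *\<^sub>R gt t"
  shows "\<forall>t \<in> {1..T}. w t = wt t"
proof -
  have d1r: "real d \<ge> 1" using assms(4) by simp
  hence d1: "d \<ge> 1" by simp
  have inj: "inj_on e {1..d}" and surj: "e ` {1..d} = UNIV"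
    using assms(6) unfolding bij_betw_def by auto
  have eta: "\<eta> > 0" using assms(2) .
  define \<delta> where "\<delta> = \<eta> / (16 * real d)"
  have \<delta>0: "\<delta> > 0" unfolding \<delta>_def using eta d1r by simp
  define P where "P s x \<longleftrightarrow> (\<forall>i\<in>{1..d}. x $ e i = \<eta> * real (cnt d s i))" for s and x :: "real^'n"
  have step: "(\<forall>h \<in> subgrad (hardf \<eta> d e) x. h = - axis (e (s mod d + 1)) 1) \<and>
              (\<forall>h \<in> subgrad (smoothed \<delta> (hardf \<eta> d e)) x. h = - axis (e (s mod d + 1)) 1)"
    if sT: "s + 1 < T" and Px: "P s x" for s x
  proof -
    define k where "k = s mod d + 1"
    have kd: "k \<in> {1..d}" unfolding k_def using d1 by (simp add: Suc_le_eq)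
    have Px': "\<forall>i\<in>{1..d}. x $ e i = \<eta> * real (cnt d s i)" using Px unfolding P_def .
    have margin: "\<And>i. i \<in> {1..d} \<Longrightarrow> i \<noteq> k \<Longrightarrow> pp \<eta> d e x i + \<eta> / (4 * real d) \<le> pp \<eta> d e x k"
      unfolding k_def by (rule margin_lemma[OF d1 eta Px'])
    have "s div d * d \<le> T" using sT div_times_less_eq_dividend[of s d] by linarith
    hence md: "real (s div d) * real d \<le> real T" by (metis of_nat_le_iff of_nat_mult)
    have ck: "cnt d s k = s div d" unfolding cnt_def k_def by simp
    have ppk: "pp \<eta> d e x k = 1 / sqrt (real d) - \<eta> * real (s div d) - \<eta> * real k / (4 * real d)"
      unfolding pp_def using Px' kd ck by simp
    have pos: "\<eta> / (8 * real d) \<le> pp \<eta> d e x k"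
      unfolding ppk using kd by (intro numeric[OF assms(1) eta assms(3) assms(4) md]) auto
    define c where "c = 1 / sqrt (real d) - \<eta> * real k / (4 * real d)"
    have hloc: "hardf \<eta> d e y = c - y $ e k" if "norm (y - x) < \<eta> / (8 * real d)" for y
      unfolding c_def by (rule hardf_local[OF d1 eta kd margin pos that])
    have r0: "\<eta> / (8 * real d) > 0" using eta d1r by simp
    have A: "\<forall>h \<in> subgrad (hardf \<eta> d e) x. h = - axis (e k) 1"
      using subgrad_unique[OF r0 hloc] by blast
    define C where "C = integral\<^sup>L (UB::(real^'n) measure) (\<lambda>v. v $ e k)"
    have sloc: "smoothed \<delta> (hardf \<eta> d e) y = (c - \<delta> * C) - y $ e k" if ny: "norm (y - x) < \<delta>" for y
    proof -
      have "smoothed \<delta> (hardf \<eta> d e) y = (c - y $ e k) - \<delta> * C"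
        unfolding C_def
      proof (rule smoothed_local[OF hardf_meas])
        fix v :: "real^'n" assume v: "v \<in> cball 0 1"
        have "norm (y + \<delta> *\<^sub>R v - x) \<le> norm (y - x) + norm (\<delta> *\<^sub>R v)"
          by (metis add.commute add_diff_eq norm_triangle_ineq)
        also have "norm (\<delta> *\<^sub>R v) \<le> \<delta>" using v \<delta>0 by (simp add: mult_left_le)
        finally have "norm (y + \<delta> *\<^sub>R v - x) < \<eta> / (8 * real d)"
          using ny unfolding \<delta>_def by simp
        hence "hardf \<eta> d e (y + \<delta> *\<^sub>R v) = c - (y + \<delta> *\<^sub>R v) $ e k" by (rule hloc)
        thus "hardf \<eta> d e (y + \<delta> *\<^sub>R v) = c - y $ e k - \<delta> * v $ e k" by simp
      qed
      thus ?thesis by simp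
    qed
    have B: "\<forall>h \<in> subgrad (smoothed \<delta> (hardf \<eta> d e)) x. h = - axis (e k) 1"
      using subgrad_unique[OF \<delta>0 sloc] by blast
    show ?thesis using A B unfolding k_def by blast
  qed
  have main: "s + 1 \<le> T \<Longrightarrow> P s (w (s+1)) \<and> P s (wt (s+1))" for s
  proof (induction s)
    case 0
    show ?case using assms(7,8) unfolding P_def cnt_def by auto
  next
    case (Suc s)
    hence sT: "s + 1 < T" by simp
    with Suc.IH have IH: "P s (w (s+1))" "P s (wt (s+1))" by auto
    have g: "g (s+1) = - axis (e (s mod d + 1)) 1" and wn: "w (Suc (s+1)) = w (s+1) - \<eta> *\<^sub>R g (s+1)"
      using assms(9)[of "s+1"] step[OF sT IH(1)] sT by auto
    have gt: "gt (s+1) = - axis (e (s mod d + 1)) 1" and wtn: "wt (Suc (s+1)) = wt (s+1) - \<eta> *\<^sub>R gt (s+1)"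
      using assms(10)[of "s+1"] step[OF sT IH(2)] sT unfolding \<delta>_def by auto
    show ?case using next_P[OF d1 inj IH(1)[unfolded P_def]] next_P[OF d1 inj IH(2)[unfolded P_def]]
      wn wtn g gt unfolding P_def by simp
  qed
  show ?thesis
  proof
    fix t assume t: "t \<in> {1..T}"
    define s where "s = t - 1"
    have s: "t = s + 1" using t unfolding s_def by simp
    with t have "P s (w t) \<and> P s (wt t)" using main by auto
    hence "\<forall>i\<in>{1..d}. w t $ e i = wt t $ e i" unfolding P_def by simp
    hence H: "\<forall>i\<in>{1..d}. w t $ e i = wt t $ e i" .
    show "w t = wt t" unfolding vec_eq_iff
    proof
      fix j :: 'n
      have "j \<in> e ` {1..d}" using surj by simp
      then obtain i where "i \<in> {1..d}" "j = e i" by blast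
      thus "w t $ j = wt t $ j" using H by simp
    qed
  qed
qed

end
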